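(* In the multi-commodity market model described in the context, assume all lower bounds $\alpha'_{is}$, $\beta'_{js}$ are finite real numbers (upper bounds may equal $+\infty$), the set $W$ is nonempty, and all price functions $g_{is}$ and $h_{js}$ ($i\in I_s$, $j\in J_s$, $s\in N$) are continuous on $W$. Suppose the following coercivity condition (C) holds: there exists $r>0$ such that for every $w=(x,y)\in W$, every $s\in N$ and every $l\in J^u_s$ with $y_{ls}>\max\{r,\beta'_{ls}\}$, there exists $k\in I^u_s$ with $x_{ks}>\alpha'_{ks}$ and $g_{ks}(w)\ge h_{ls}(w)$. Then the variational inequality $$\text{find } \bar w\in W:\ \sum_{s\in N}\Big[\sum_{i\in I_s} g_{is}(\bar w)(x_{is}-\bar x_{is})-\sum_{j\in J_s} h_{js}(\bar w)(y_{js}-\bar y_{js})\Big]\ge 0\quad \forall w=(x,y)\in W$$ has a solution.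
   Context: Let $N=\{1,\dots,n\}$ index commodities. For each $s\in N$ let $I_s$ (traders) and $J_s$ (buyers) be finite index sets. Variables: offer values $x_{is}$, $i\in I_s$, and bid values $y_{js}$, $j\in J_s$; $x=(x_{is})$, $y=(y_{js})$, $w=(x,y)\in\mathbb{R}^m$. Capacity bounds: $\alpha'_{is}\in\mathbb{R}$, $\alpha''_{is}\in(\alpha'_{is},+\infty]$, $\beta'_{js}\in\mathbb{R}$, $\beta''_{js}\in(\beta'_{js},+\infty]$. Given $b_s\in\mathbb{R}$, the feasible set is $W=\prod_{s\in N}W_s$ with $$W_s=\Big\{(x_{(s)},y_{(s)}) : \sum_{i\in I_s}x_{is}-\sum_{j\in J_s}y_{js}=b_s,\ \alpha'_{is}\le x_{is}\le\alpha''_{is}\ (i\in I_s),\ \beta'_{js}\le y_{js}\le\beta''_{js}\ (j\in J_s)\Big\}$$ (an upper bound $+\infty$ means no upper constraint). Price functions $g_{is},h_{js}:W\to\mathbb{R}$. Index sets of unbounded participants: $I^u_s=\{i\in I_s:\alpha''_{is}=+\infty\}$, $J^u_s=\{j\in J_s:\beta''_{js}=+\infty\}$. *)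

theory Defs
  imports "HOL-Analysis.Analysis"
begin

text \<open>A point w = (x,y) is a pair of functions: x i s is the offer of trader i of
commodity s, y j s the bid of buyer j of commodity s. Coordinates outside the
index sets are fixed to 0, so W is a subset of a copy of R^m (product topology).
Upper bounds are extended reals (\<infinity> means no upper bound).\<close>

type_synonym ('i,'j) point = "('i \<Rightarrow> nat \<Rightarrow> real) \<times> ('j \<Rightarrow> nat \<Rightarrow> real)"

definition feasible_set ::
  "nat \<Rightarrow> (nat \<Rightarrow> 'i set) \<Rightarrow> (nat \<Rightarrow> 'j set) \<Rightarrow> (nat \<Rightarrow> real)
   \<Rightarrow> ('i \<Rightarrow> nat \<Rightarrow> real) \<Rightarrow> ('i \<Rightarrow> nat \<Rightarrow> ereal)
   \<Rightarrow> ('j \<Rightarrow> nat \<Rightarrow> real) \<Rightarrow> ('j \<Rightarrow> nat \<Rightarrow> ereal) \<Rightarrow> ('i,'j) point set" where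
  "feasible_set n I J b \<alpha>1 \<alpha>2 \<beta>1 \<beta>2 =
    {(x, y). (\<forall>s i. (s \<notin> {1..n} \<or> i \<notin> I s) \<longrightarrow> x i s = 0)
           \<and> (\<forall>s j. (s \<notin> {1..n} \<or> j \<notin> J s) \<longrightarrow> y j s = 0)
           \<and> (\<forall>s\<in>{1..n}. (\<Sum>i\<in>I s. x i s) - (\<Sum>j\<in>J s. y j s) = b s
                \<and> (\<forall>i\<in>I s. \<alpha>1 i s \<le> x i s \<and> ereal (x i s) \<le> \<alpha>2 i s)
                \<and> (\<forall>j\<in>J s. \<beta>1 j s \<le> y j s \<and> ereal (y j s) \<le> \<beta>2 j s))}"

end

theory Submission
  imports Defs "HOL-Homology.Homology"
begin


lemma nsphere_eu: "nsphere p = top_of_set {x::nat\<Rightarrow>real. (\<Sum>i\<le>p. x i ^ 2) = 1 \<and> (\<forall>i>p. x i = 0)}"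
  by (simp add: nsphere euclidean_product_topology)

lemma cont_coord:
  "continuous_on S f \<Longrightarrow> continuous_on S (\<lambda>z. (f z :: 'a\<Rightarrow>'b::topological_space) i)"
  by (rule continuous_on_compose2[OF continuous_on_product_coordinates]) auto

lemma contractible_ball_fun:
  "contractible {x::nat\<Rightarrow>real. (\<forall>i>p. x i = 0) \<and> (\<Sum>i\<le>p. x i ^ 2) \<le> 1}" (is "contractible ?D")
  unfolding contractible_def
proof (intro exI)
  let ?h = "\<lambda>(t::real, x::nat\<Rightarrow>real). (\<lambda>i. (1 - t) * x i)"
  show "homotopic_with_canon (\<lambda>x. True) ?D ?D id (\<lambda>x. (\<lambda>i. 0))"
  proof (subst homotopic_with, simp, intro exI conjI)
    show "continuous_map (prod_topology (top_of_set {0..1}) (top_of_set ?D)) (top_of_set ?D) ?h"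
    proof (simp, intro conjI)
      show "continuous_on ({0..1} \<times> ?D) ?h"
        by (intro continuous_on_coordinatewise_then_product)
           (simp add: case_prod_beta, intro continuous_intros cont_coord)
      show "?h \<in> {0..1} \<times> ?D \<rightarrow> ?D"
      proof clarsimp
        fix t :: real and x :: "nat \<Rightarrow> real"
        assume t: "0 \<le> t" "t \<le> 1" and x: "\<forall>i>p. x i = 0" "(\<Sum>i\<le>p. (x i)\<^sup>2) \<le> 1"
        have "(\<Sum>i\<le>p. ((1 - t) * x i)\<^sup>2) = (1-t)^2 * (\<Sum>i\<le>p. (x i)\<^sup>2)"
          by (simp add: power_mult_distrib sum_distrib_left)
        also have "\<dots> \<le> 1 * 1"
          using t x by (intro mult_mono) (auto simp: power_le_one sum_nonneg)
        finally show "(\<Sum>i\<le>p. ((1 - t) * x i)\<^sup>2) \<le> 1" by simp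
      qed
    qed
  qed auto
qed


lemma brouwer_ball_fun:
  fixes g :: "(nat\<Rightarrow>real) \<Rightarrow> (nat\<Rightarrow>real)" and p :: nat
  defines "D \<equiv> {x::nat\<Rightarrow>real. (\<forall>i>p. x i = 0) \<and> (\<Sum>i\<le>p. x i ^ 2) \<le> 1}"
  assumes cont: "continuous_on D g" and gD: "g ` D \<subseteq> D"
  shows "\<exists>x\<in>D. g x = x"
proof (rule ccontr)
  assume nofix: "\<not> (\<exists>x\<in>D. g x = x)"
  define S where "S = {x::nat\<Rightarrow>real. (\<Sum>i\<le>p. x i ^ 2) = 1 \<and> (\<forall>i>p. x i = 0)}"
  define nrm where "nrm = (\<lambda>v::nat\<Rightarrow>real. \<Sum>i\<le>p. v i ^ 2)"
  have SD: "S \<subseteq> D" by (auto simp: S_def D_def)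
  have nrm_pos: "nrm v > 0" if v0: "\<forall>i>p. v i = 0" and vne: "v \<noteq> (\<lambda>i. 0)" for v
  proof -
    obtain i where "v i \<noteq> 0" using vne by auto
    then have "i \<le> p" using v0 by (meson not_le)
    then have "v i ^ 2 \<le> nrm v" unfolding nrm_def
      by (intro member_le_sum) auto
    moreover have "v i ^ 2 > 0" using \<open>v i \<noteq> 0\<close> by simp
    ultimately show ?thesis by linarith
  qed
  have nrm_scale: "nrm (\<lambda>i. v i / sqrt (nrm v)) = 1" if "nrm v > 0" for v
  proof -
    have "nrm (\<lambda>i. v i / sqrt (nrm v)) = nrm v / nrm v"
      using that unfolding nrm_def by (simp add: power_divide flip: sum_divide_distrib)
    then show ?thesis using that by simp
  qed
  define H where "H = (\<lambda>(t::real, x::nat\<Rightarrow>real). (\<lambda>i. (x i - t * g x i) / sqrt (nrm (\<lambda>i. x i - t * g x i))))"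
  have Hpos: "nrm (\<lambda>i. x i - t * g x i) > 0" if "t \<in> {0..1}" "x \<in> S" for t x
  proof (rule nrm_pos)
    have gx: "g x \<in> D" using gD SD that by auto
    show "\<forall>i>p. x i - t * g x i = 0" using that gx by (auto simp: S_def D_def)
    show "(\<lambda>i. x i - t * g x i) \<noteq> (\<lambda>i. 0)"
    proof
      assume eq: "(\<lambda>i. x i - t * g x i) = (\<lambda>i. 0)"
      then have xi: "x i = t * g x i" for i by (metis eq_iff_diff_eq_0)
      have "1 = (\<Sum>i\<le>p. x i ^ 2)" using that by (simp add: S_def)
      also have "\<dots> = t^2 * (\<Sum>i\<le>p. g x i ^ 2)"
        by (simp add: xi power_mult_distrib sum_distrib_left)
      also have "\<dots> \<le> t^2 * 1"
        using gx by (intro mult_left_mono) (auto simp: D_def)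
      finally have "1 \<le> t^2" by simp
      moreover have "t^2 \<le> t" using that(1) by (simp add: power2_eq_square mult_left_le_one_le)
      ultimately have "t = 1" using that(1) by simp
      then have "g x = x" using xi by auto
      then show False using nofix that SD by auto
    qed
  qed
  have hom1: "homotopic_with_canon (\<lambda>x. True) S S id (\<lambda>x. H (1, x))"
  proof (subst homotopic_with, simp, intro exI conjI)
    show "continuous_map (prod_topology (top_of_set {0..1}) (top_of_set S)) (top_of_set S) H"
    proof (simp, intro conjI)
      have cg: "continuous_on ({0..1} \<times> S) (\<lambda>z. g (snd z))"
        by (rule continuous_on_compose2[OF cont continuous_on_snd[OF continuous_on_id]]) (use SD in auto)
      have c1: "continuous_on ({0..1} \<times> S) (\<lambda>z. snd z k)" for k
        by (rule cont_coord, rule continuous_on_snd, rule continuous_on_id)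
      have c2: "continuous_on ({0..1} \<times> S) (\<lambda>z. g (snd z) k)" for k
        by (rule cont_coord[OF cg])
      have c3: "continuous_on ({0..1} \<times> S) (\<lambda>z. snd z k - fst z * g (snd z) k)" for k
        by (intro continuous_on_diff continuous_on_mult c1 c2 continuous_on_fst continuous_on_id)
      show "continuous_on ({0..1} \<times> S) H"
        unfolding H_def nrm_def case_prod_beta
        apply (rule continuous_on_coordinatewise_then_product)
        apply (rule continuous_on_divide)
          apply (rule c3)
         apply (intro continuous_on_real_sqrt continuous_on_sum continuous_on_power c3)
        using Hpos by (auto simp: nrm_def) (metis atLeastAtMost_iff less_irrefl)
      show "H \<in> {0..1} \<times> S \<rightarrow> S"
      proof clarsimp
        fix t :: real and x assume t: "0 \<le> t" "t \<le> 1" and x: "x \<in> S"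
        have p: "nrm (\<lambda>i. x i - t * g x i) > 0" using Hpos t x by auto
        have gx: "g x \<in> D" using gD SD x by auto
        show "H (t, x) \<in> S"
          using nrm_scale[OF p] x gx by (auto simp: H_def S_def D_def nrm_def)
      qed
    qed
  qed (auto simp: H_def S_def nrm_def)
  define \<phi> where "\<phi> = (\<lambda>x::nat\<Rightarrow>real. (\<lambda>i. (x i - g x i) / sqrt (nrm (\<lambda>i. x i - g x i))))"
  have phipos: "nrm (\<lambda>i. x i - g x i) > 0" if "x \<in> D" for x
  proof (rule nrm_pos)
    have gx: "g x \<in> D" using gD that by auto
    show "\<forall>i>p. x i - g x i = 0" using that gx by (auto simp: D_def)
    show "(\<lambda>i. x i - g x i) \<noteq> (\<lambda>i. 0)"
    proof
      assume "(\<lambda>i. x i - g x i) = (\<lambda>i. 0)"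
      then have "g x = x" by (metis eq_iff_diff_eq_0 ext)
      then show False using nofix that by auto
    qed
  qed
  have contphi: "continuous_map (top_of_set D) (top_of_set S) \<phi>"
  proof (simp, intro conjI)
    show "continuous_on D \<phi>"
      unfolding \<phi>_def nrm_def
      apply (rule continuous_on_coordinatewise_then_product)
      apply (rule continuous_on_divide)
        apply (intro continuous_on_diff cont_coord[OF cont] cont_coord[OF continuous_on_id])
       apply (intro continuous_on_real_sqrt continuous_on_sum continuous_on_power continuous_on_diff cont_coord[OF cont] cont_coord[OF continuous_on_id])
      using phipos by (auto simp: nrm_def) (metis less_irrefl)
    show "\<phi> \<in> D \<rightarrow> S"
    proof
      fix x assume x: "x \<in> D"
      have gx: "g x \<in> D" using gD x by auto
      show "\<phi> x \<in> S"
        using nrm_scale[OF phipos[OF x]] x gx by (auto simp: \<phi>_def S_def D_def nrm_def)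
    qed
  qed
  have contid: "continuous_map (top_of_set S) (top_of_set D) id"
    using SD by (auto simp: continuous_on_id)
  obtain c where c: "homotopic_with (\<lambda>h. True) (top_of_set S) (top_of_set S) (\<phi> \<circ> id) (\<lambda>x. c)"
    using nullhomotopic_through_contractible_space[OF contid contphi]
    using contractible_ball_fun[of p] unfolding D_def by auto
  have "(\<lambda>x. H (1, x)) = \<phi> \<circ> id" by (auto simp: H_def \<phi>_def)
  then have "homotopic_with (\<lambda>h. True) (top_of_set S) (top_of_set S) id (\<lambda>x. c)"
    using hom1 c by (metis homotopic_with_trans)
  then have "contractible_space (top_of_set S)"
    unfolding contractible_space_def by blast
  then show False using non_contractible_space_nsphere[of p] by (simp add: nsphere_eu S_def)
qed




definition cvx :: "('c \<Rightarrow> real) set \<Rightarrow> bool" where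
  "cvx K \<longleftrightarrow> (\<forall>u\<in>K. \<forall>v\<in>K. \<forall>t\<in>{0..1}. (\<lambda>c. (1-t) * u c + t * v c) \<in> K)"

lemma proj_char:
  fixes C :: "'c set"
  assumes fin: "finite C" and cv: "cvx K" and vK: "v \<in> K" and uK: "u \<in> K"
    and min: "\<And>w. w \<in> K \<Longrightarrow> (\<Sum>c\<in>C. (z c - v c)^2) \<le> (\<Sum>c\<in>C. (z c - w c)^2)"
  shows "(\<Sum>c\<in>C. (z c - v c) * (u c - v c)) \<le> 0"
proof (rule ccontr)
  define A where "A = (\<Sum>c\<in>C. (z c - v c) * (u c - v c))"
  define Q where "Q = (\<Sum>c\<in>C. (u c - v c)^2)"
  assume "\<not> ?thesis"
  then have A: "A > 0" by (simp add: A_def)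
  have Q: "Q \<ge> 0" unfolding Q_def by (intro sum_nonneg) auto
  define t where "t = min 1 (A / (Q + 1))"
  have t: "0 < t" "t \<le> 1" using A Q by (auto simp: t_def)
  have "(\<lambda>c. (1-t) * v c + t * u c) \<in> K" using cv vK uK t unfolding cvx_def by auto
  from min[OF this] have "(\<Sum>c\<in>C. (z c - v c)^2) \<le> (\<Sum>c\<in>C. (z c - ((1-t) * v c + t * u c))^2)" .
  also have "\<dots> = (\<Sum>c\<in>C. (z c - v c)^2 - 2 * t * ((z c - v c) * (u c - v c)) + t^2 * (u c - v c)^2)"
    by (intro sum.cong) (auto simp: power2_eq_square algebra_simps)
  also have "\<dots> = (\<Sum>c\<in>C. (z c - v c)^2) - 2 * t * A + t^2 * Q"
    by (simp add: sum.distrib sum_subtractf sum_distrib_left A_def Q_def)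
  finally have "2 * t * A \<le> t^2 * Q" by simp
  then have "2 * A \<le> t * Q" using t by (simp add: power2_eq_square)
  moreover have "t * Q \<le> (A / (Q+1)) * Q" using Q t by (intro mult_right_mono) (auto simp: t_def)
  moreover have "(A / (Q+1)) * Q < A" using A Q by (simp add: field_simps)
  ultimately show False using A by linarith
qed

lemma amgm2: "(a::real) * b \<le> (a^2 + b^2) / 2"
proof -
  have "0 \<le> (a - b)^2" by simp
  then show ?thesis by (simp add: power2_diff field_simps)
qed

lemma proj_exists:
  fixes C :: "'c set" and K :: "('c \<Rightarrow> real) set"
  assumes fin: "finite C" and cK: "compact K" and ne: "K \<noteq> {}" and cv: "cvx K"
    and suppA: "\<forall>v\<in>K. \<forall>c. c \<notin> C \<longrightarrow> v c = 0"
  shows "\<exists>P. continuous_on UNIV P \<and> (\<forall>z. P z \<in> K) \<and> (\<forall>z\<in>K. P z = z) \<and>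
           (\<forall>z. \<forall>u\<in>K. (\<Sum>c\<in>C. (z c - P z c) * (u c - P z c)) \<le> 0)"
proof -
  have supp: "\<And>v c. v \<in> K \<Longrightarrow> c \<notin> C \<Longrightarrow> v c = 0" using suppA by blast
  define ok where "ok = (\<lambda>z v. v \<in> K \<and> (\<forall>u\<in>K. (\<Sum>c\<in>C. (z c - v c) * (u c - v c)) \<le> 0))"
  have ex: "\<exists>v. ok z v" for z
  proof -
    have "continuous_on K (\<lambda>v. \<Sum>c\<in>C. (z c - v c)^2)"
      by (intro continuous_on_sum continuous_on_power continuous_on_diff continuous_on_const
            cont_coord[OF continuous_on_id])
    from continuous_attains_inf[OF cK ne this] obtain v where
      v: "v \<in> K" "\<And>w. w \<in> K \<Longrightarrow> (\<Sum>c\<in>C. (z c - v c)^2) \<le> (\<Sum>c\<in>C. (z c - w c)^2)"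
      by blast
    then show ?thesis unfolding ok_def using proj_char[OF fin cv v(1) _ v(2)] by blast
  qed
  define P where "P = (\<lambda>z. SOME v. ok z v)"
  have okP: "ok z (P z)" for z unfolding P_def using ex by (rule someI_ex)
  have PK: "P z \<in> K" for z using okP[of z] by (simp add: ok_def)
  have charP: "(\<Sum>c\<in>C. (z c - P z c) * (u c - P z c)) \<le> 0" if "u \<in> K" for z u
    using okP[of z] that by (simp add: ok_def)
  have fixP: "P z = z" if "z \<in> K" for z
  proof
    fix c
    show "P z c = z c"
    proof (cases "c \<in> C")
      case True
      have "(\<Sum>c\<in>C. (z c - P z c)^2) \<le> 0"
        using charP[OF that, of z] by (simp add: power2_eq_square)
      moreover have "\<forall>c\<in>C. (z c - P z c)^2 \<ge> 0" by simp
      ultimately have "\<forall>c\<in>C. (z c - P z c)^2 = 0"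
        using sum_nonneg_eq_0_iff[OF fin, of "\<lambda>c. (z c - P z c)^2"] by (simp add: order_antisym sum_nonneg)
      then show ?thesis using True by simp
    next
      case False
      then show ?thesis using supp[OF PK False] supp[OF that False] by simp
    qed
  qed
  have nonexp: "(\<Sum>c\<in>C. (P z1 c - P z2 c)^2) \<le> (\<Sum>c\<in>C. (z1 c - z2 c)^2)" for z1 z2
  proof -
    have a: "(\<Sum>c\<in>C. (z1 c - P z1 c) * (P z2 c - P z1 c)) \<le> 0" by (rule charP[OF PK])
    have b: "(\<Sum>c\<in>C. (z2 c - P z2 c) * (P z1 c - P z2 c)) \<le> 0" by (rule charP[OF PK])
    have "(\<Sum>c\<in>C. (z1 c - P z1 c) * (P z2 c - P z1 c)) + (\<Sum>c\<in>C. (z2 c - P z2 c) * (P z1 c - P z2 c))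
        = (\<Sum>c\<in>C. (P z1 c - P z2 c)^2 - (z1 c - z2 c) * (P z1 c - P z2 c))"
      unfolding sum.distrib[symmetric] by (rule sum.cong) (auto simp: power2_eq_square algebra_simps)
    also have "\<dots> \<ge> (\<Sum>c\<in>C. (P z1 c - P z2 c)^2 - ((z1 c - z2 c)^2 + (P z1 c - P z2 c)^2) / 2)"
    proof (intro sum_mono)
      fix c
      have "(z1 c - z2 c) * (P z1 c - P z2 c) \<le> ((z1 c - z2 c)^2 + (P z1 c - P z2 c)^2) / 2"
        by (rule amgm2)
      then show "(P z1 c - P z2 c)^2 - ((z1 c - z2 c)^2 + (P z1 c - P z2 c)^2) / 2
          \<le> (P z1 c - P z2 c)^2 - (z1 c - z2 c) * (P z1 c - P z2 c)" by linarith
    qed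
    finally have "(\<Sum>c\<in>C. (P z1 c - P z2 c)^2 - ((z1 c - z2 c)^2 + (P z1 c - P z2 c)^2) / 2) \<le> 0"
      using a b by linarith
    then have "(\<Sum>c\<in>C. ((P z1 c - P z2 c)^2 - (z1 c - z2 c)^2) / 2) \<le> 0"
      by (simp add: field_simps)
    then have "(\<Sum>c\<in>C. (P z1 c - P z2 c)^2 - (z1 c - z2 c)^2) / 2 \<le> 0"
      by (simp add: sum_divide_distrib)
    then show ?thesis by (simp add: sum_subtractf)
  qed
  have contP: "continuous_on UNIV P"
  proof (intro continuous_on_coordinatewise_then_product)
    fix c
    show "continuous_on UNIV (\<lambda>z. P z c)"
    proof (cases "c \<in> C")
      case False
      then have "(\<lambda>z. P z c) = (\<lambda>z. 0)" using supp[OF PK] by auto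
      show ?thesis unfolding \<open>(\<lambda>z. P z c) = (\<lambda>z. 0)\<close> by (rule continuous_on_const)
    next
      case True
      show ?thesis
      unfolding continuous_on_def
      proof (rule ballI)
        fix z0 :: "'c \<Rightarrow> real"
        assume "z0 \<in> UNIV"
        define d where "d = (\<lambda>z::'c\<Rightarrow>real. \<Sum>c\<in>C. (z c - z0 c)^2)"
        have "continuous_on UNIV d" unfolding d_def
          by (intro continuous_on_sum continuous_on_power continuous_on_diff continuous_on_const
              cont_coord[OF continuous_on_id])
        then have "(d \<longlongrightarrow> d z0) (at z0)"
          by (simp add: continuous_on_def)
        then have "(d \<longlongrightarrow> 0) (at z0)" by (simp add: d_def)
        then have sq: "((\<lambda>z. sqrt (d z)) \<longlongrightarrow> 0) (at z0)"
          using tendsto_real_sqrt by force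
        have le: "norm (P z c - P z0 c) \<le> sqrt (d z)" for z
        proof -
          have "(P z c - P z0 c)^2 \<le> (\<Sum>c\<in>C. (P z c - P z0 c)^2)"
            using True fin by (intro member_le_sum) auto
          also have "\<dots> \<le> d z" using nonexp by (simp add: d_def)
          finally show ?thesis by (simp add: real_le_rsqrt)
        qed
        have "((\<lambda>z. P z c - P z0 c) \<longlongrightarrow> 0) (at z0)"
          by (rule Lim_null_comparison[OF _ sq]) (use le in auto)
        then show "((\<lambda>z. P z c) \<longlongrightarrow> P z0 c) (at z0 within UNIV)"
          by (simp add: LIM_zero_cancel)
      qed
    qed
  qed
  show ?thesis using contP PK fixP charP by blast
qed




lemma brouwer_fun:
  fixes C :: "'c set" and K :: "('c \<Rightarrow> real) set"
  assumes fin: "finite C" and cK: "compact K" and ne: "K \<noteq> {}" and cv: "cvx K"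
    and suppA: "\<forall>v\<in>K. \<forall>c. c \<notin> C \<longrightarrow> v c = 0"
    and contf: "continuous_on K f" and fK: "f ` K \<subseteq> K"
  shows "\<exists>x\<in>K. f x = x"
proof (cases "C = {}")
  have supp: "\<And>v c. v \<in> K \<Longrightarrow> c \<notin> C \<Longrightarrow> v c = 0" using suppA by blast
  case True
  obtain v where v: "v \<in> K" using ne by auto
  have "\<And>w. w \<in> K \<Longrightarrow> w = v" by (intro ext) (metis True empty_iff supp v)
  then show ?thesis using fK v by auto
next
  case False
  have supp: "\<And>v c. v \<in> K \<Longrightarrow> c \<notin> C \<Longrightarrow> v c = 0" using suppA by blast
  obtain P where contP: "continuous_on UNIV P" and PK: "\<And>z. P z \<in> K" and fixP: "\<And>z. z \<in> K \<Longrightarrow> P z = z"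
    using proj_exists[OF fin cK ne cv suppA] by blast
  define m where "m = card C"
  have m: "m > 0" using False fin by (simp add: m_def card_gt_0_iff)
  define p where "p = m - 1"
  have mp: "{..p} = {0..<m}" using m by (auto simp: p_def)
  obtain h where h: "bij_betw h {0..<m} C" using ex_bij_betw_nat_finite[OF fin] by (auto simp: m_def)
  have "continuous_on K (\<lambda>v. \<Sum>c\<in>C. (v c)^2)"
    by (intro continuous_on_sum continuous_on_power cont_coord[OF continuous_on_id])
  from continuous_attains_sup[OF cK ne this] obtain v0 where
    v0: "v0 \<in> K" "\<And>w. w \<in> K \<Longrightarrow> (\<Sum>c\<in>C. (w c)^2) \<le> (\<Sum>c\<in>C. (v0 c)^2)" by blast
  define M where "M = (\<Sum>c\<in>C. (v0 c)^2)"
  have M0: "M \<ge> 0" unfolding M_def by (intro sum_nonneg) auto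
  define R where "R = M + 1"
  have R: "R > 0" "M \<le> R^2" using M0 by (auto simp: R_def power2_eq_square algebra_simps)
  define D where "D = {x::nat\<Rightarrow>real. (\<forall>i>p. x i = 0) \<and> (\<Sum>i\<le>p. x i ^ 2) \<le> 1}"
  define enc where "enc = (\<lambda>v::'c\<Rightarrow>real. (\<lambda>k::nat. if k < m then v (h k) / R else 0))"
  define hi where "hi = inv_into {0..<m} h"
  define dec where "dec = (\<lambda>x::nat\<Rightarrow>real. (\<lambda>c. if c \<in> C then R * x (hi c) else 0))"
  have FP: "\<exists>x\<in>D. g x = x" if "continuous_on D g" "g \<in> D \<rightarrow> D" for g
    unfolding D_def by (rule brouwer_ball_fun) (use that in \<open>auto simp: D_def\<close>)
  have cenc: "continuous_on K enc"
    unfolding enc_def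
  proof (intro continuous_on_coordinatewise_then_product)
    fix k
    show "continuous_on K (\<lambda>x. if k < m then x (h k) / R else 0)"
      using R(1) by (cases "k < m") (auto intro!: continuous_on_divide continuous_on_const cont_coord[OF continuous_on_id])
  qed
  have encD: "enc \<in> K \<rightarrow> D"
  proof
    fix v assume v: "v \<in> K"
    have "(\<Sum>i\<le>p. enc v i ^ 2) = (\<Sum>k\<in>{0..<m}. (v (h k))^2 / R^2)"
      by (simp add: mp enc_def power_divide)
    also have "\<dots> = (\<Sum>k\<in>{0..<m}. (v (h k))^2) / R^2" by (simp add: sum_divide_distrib)
    also have "(\<Sum>k\<in>{0..<m}. (v (h k))^2) = (\<Sum>c\<in>C. (v c)^2)"
      using sum.reindex_bij_betw[OF h, of "\<lambda>c. (v c)^2"] by simp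
    finally have s: "(\<Sum>i\<le>p. enc v i ^ 2) = (\<Sum>c\<in>C. (v c)^2) / R^2" .
    have "(\<Sum>c\<in>C. (v c)^2) \<le> R^2" using v0(2)[OF v] R by (simp add: M_def)
    then have "(\<Sum>i\<le>p. enc v i ^ 2) \<le> 1" unfolding s using R by (simp add: divide_le_eq_1)
    moreover have "\<forall>i>p. enc v i = 0" by (auto simp: enc_def p_def)
    ultimately show "enc v \<in> D" by (simp add: D_def)
  qed
  have cdec: "continuous_on D dec"
    unfolding dec_def
  proof (intro continuous_on_coordinatewise_then_product)
    fix c
    show "continuous_on D (\<lambda>x. if c \<in> C then R * x (hi c) else 0)"
      by (cases "c \<in> C") (auto intro!: continuous_on_mult continuous_on_const cont_coord[OF continuous_on_id])
  qed
  have ri: "P (dec (enc y)) = y" if y: "y \<in> K" for y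
  proof -
    have "dec (enc y) = y"
    proof
      fix c show "dec (enc y) c = y c"
      proof (cases "c \<in> C")
        case True
        have "hi c \<in> {0..<m}" "h (hi c) = c"
          using True h unfolding hi_def by (auto simp: bij_betw_def inv_into_into f_inv_into_f)
        then show ?thesis using True R by (simp add: dec_def enc_def)
      next
        case False then show ?thesis using supp[OF y] by (simp add: dec_def)
      qed
    qed
    then show ?thesis using fixP[OF y] by simp
  qed
  obtain y where "y \<in> K" "f y = y"
  proof (rule invertible_fixpoint_property[where S=D and T=K and i=enc and r="P \<circ> dec" and g=f])
    show "continuous_on K enc" by (rule cenc)
    show "enc \<in> K \<rightarrow> D" by (rule encD)
    show "continuous_on D (P \<circ> dec)"
      by (rule continuous_on_compose[OF cdec]) (rule continuous_on_subset[OF contP], auto)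
    show "P \<circ> dec \<in> D \<rightarrow> K" using PK by auto
    show "\<And>y. y \<in> K \<Longrightarrow> (P \<circ> dec) (enc y) = y" using ri by simp
    show "\<And>g. continuous_on D g \<Longrightarrow> g \<in> D \<rightarrow> D \<Longrightarrow> \<exists>x\<in>D. g x = x" by (rule FP)
    show "continuous_on K f" by (rule contf)
    show "f \<in> K \<rightarrow> K" using fK by auto
  qed
  then show ?thesis by blast
qed

lemma vi_fun:
  fixes C :: "'c set" and K :: "('c \<Rightarrow> real) set"
  assumes fin: "finite C" and cK: "compact K" and ne: "K \<noteq> {}" and cv: "cvx K"
    and suppA: "\<forall>v\<in>K. \<forall>c. c \<notin> C \<longrightarrow> v c = 0"
    and contG: "\<And>c. c \<in> C \<Longrightarrow> continuous_on K (G c)"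
  shows "\<exists>vb\<in>K. \<forall>v\<in>K. (\<Sum>c\<in>C. G c vb * (v c - vb c)) \<ge> 0"
proof -
  obtain P where contP: "continuous_on UNIV P" and PK: "\<And>z. P z \<in> K"
    and charP: "\<And>z u. u \<in> K \<Longrightarrow> (\<Sum>c\<in>C. (z c - P z c) * (u c - P z c)) \<le> 0"
    using proj_exists[OF fin cK ne cv suppA] by blast
  define q where "q = (\<lambda>v::'c\<Rightarrow>real. (\<lambda>c. if c \<in> C then v c - G c v else 0))"
  have cq: "continuous_on K q"
    unfolding q_def
  proof (intro continuous_on_coordinatewise_then_product)
    fix c
    show "continuous_on K (\<lambda>v. if c \<in> C then v c - G c v else 0)"
      by (cases "c \<in> C") (auto intro!: continuous_on_diff continuous_on_const cont_coord[OF continuous_on_id] contG)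
  qed
  have "\<exists>x\<in>K. (P \<circ> q) x = x"
  proof (rule brouwer_fun[OF fin cK ne cv suppA])
    show "continuous_on K (P \<circ> q)"
      by (rule continuous_on_compose[OF cq]) (rule continuous_on_subset[OF contP], auto)
    show "(P \<circ> q) ` K \<subseteq> K" using PK by auto
  qed
  then obtain vb where vb: "vb \<in> K" "P (q vb) = vb" by auto
  show ?thesis
  proof (intro bexI[OF _ vb(1)] ballI)
    fix v assume v: "v \<in> K"
    have "(\<Sum>c\<in>C. (q vb c - P (q vb) c) * (v c - P (q vb) c)) \<le> 0" by (rule charP[OF v])
    also have "(\<Sum>c\<in>C. (q vb c - P (q vb) c) * (v c - P (q vb) c)) = - (\<Sum>c\<in>C. G c vb * (v c - vb c))"
      unfolding vb(2) by (simp add: q_def sum_negf[symmetric])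
    finally show "(\<Sum>c\<in>C. G c vb * (v c - vb c)) \<ge> 0" by simp
  qed
qed




lemma ereal_le_real: "ereal a \<le> e \<Longrightarrow> e \<noteq> \<infinity> \<Longrightarrow> a \<le> real_of_ereal e"
  by (cases e) auto

lemma ereal_cvx: "ereal a \<le> e \<Longrightarrow> ereal b \<le> e \<Longrightarrow> 0 \<le> t \<Longrightarrow> t \<le> 1 \<Longrightarrow> ereal ((1-t)*a + t*b) \<le> e"
proof (cases e)
  case (real r)
  assume "ereal a \<le> e" "ereal b \<le> e" "0 \<le> t" "t \<le> 1"
  then have "a \<le> r" "b \<le> r" using real by auto
  then have "(1-t)*a + t*b \<le> (1-t)*r + t*r"
    using \<open>0 \<le> t\<close> \<open>t \<le> 1\<close> by (intro add_mono mult_left_mono) auto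
  then show ?thesis using real by (simp add: algebra_simps)
qed auto

lemma sum_comb: "(\<Sum>i\<in>A. (1-t) * u i + t * v i) = (1-t) * (\<Sum>i\<in>A. u i) + t * (\<Sum>i\<in>A. (v i::real))"
  by (simp add: sum.distrib sum_distrib_left)

lemma cvx_ge: "(z::real) \<le> a \<Longrightarrow> z \<le> b \<Longrightarrow> 0 \<le> (t::real) \<Longrightarrow> t \<le> 1 \<Longrightarrow> z \<le> (1-t)*a + t*b"
proof -
  assume "z \<le> a" "z \<le> b" "0 \<le> t" "t \<le> 1"
  then have "(1-t)*z + t*z \<le> (1-t)*a + t*b" by (intro add_mono mult_left_mono) auto
  then show ?thesis by (simp add: algebra_simps)
qed

lemma cvx_le: "a \<le> (z::real) \<Longrightarrow> b \<le> z \<Longrightarrow> 0 \<le> (t::real) \<Longrightarrow> t \<le> 1 \<Longrightarrow> (1-t)*a + t*b \<le> z"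
proof -
  assume "a \<le> z" "b \<le> z" "0 \<le> t" "t \<le> 1"
  then have "(1-t)*a + t*b \<le> (1-t)*z + t*z" by (intro add_mono mult_left_mono) auto
  then show ?thesis by (simp add: algebra_simps)
qed

lemma VIR:
  fixes n :: nat and I :: "nat \<Rightarrow> 'i set" and J :: "nat \<Rightarrow> 'j set"
    and b :: "nat \<Rightarrow> real"
    and \<alpha>1 :: "'i \<Rightarrow> nat \<Rightarrow> real" and \<alpha>2 :: "'i \<Rightarrow> nat \<Rightarrow> ereal"
    and \<beta>1 :: "'j \<Rightarrow> nat \<Rightarrow> real" and \<beta>2 :: "'j \<Rightarrow> nat \<Rightarrow> ereal"
    and g :: "'i \<Rightarrow> nat \<Rightarrow> ('i,'j) point \<Rightarrow> real"
    and h :: "'j \<Rightarrow> nat \<Rightarrow> ('i,'j) point \<Rightarrow> real"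
    and R :: real
  defines "W \<equiv> feasible_set n I J b \<alpha>1 \<alpha>2 \<beta>1 \<beta>2"
  defines "WR \<equiv> {w\<in>W. \<forall>s\<in>{1..n}. \<forall>l\<in>J s. \<beta>2 l s = \<infinity> \<longrightarrow> snd w l s \<le> R}"
  assumes finI: "\<And>s. s \<in> {1..n} \<Longrightarrow> finite (I s)"
    and finJ: "\<And>s. s \<in> {1..n} \<Longrightarrow> finite (J s)"
    and g_cont: "\<And>s i. s \<in> {1..n} \<Longrightarrow> i \<in> I s \<Longrightarrow> continuous_on W (g i s)"
    and h_cont: "\<And>s j. s \<in> {1..n} \<Longrightarrow> j \<in> J s \<Longrightarrow> continuous_on W (h j s)"
    and WR_ne: "WR \<noteq> {}"
  shows "\<exists>wb\<in>WR. \<forall>w\<in>WR. (\<Sum>s\<in>{1..n}. (\<Sum>i\<in>I s. g i s wb * (fst w i s - fst wb i s))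
                 - (\<Sum>j\<in>J s. h j s wb * (snd w j s - snd wb j s))) \<ge> 0"
proof -
  define SI where "SI = (SIGMA s:{1..n}. I s)"
  define SJ where "SJ = (SIGMA s:{1..n}. J s)"
  have finSI: "finite SI" unfolding SI_def using finI by (intro finite_SigmaI) auto
  have finSJ: "finite SJ" unfolding SJ_def using finJ by (intro finite_SigmaI) auto
  define C :: "(nat \<times> 'i + nat \<times> 'j) set" where "C = Inl ` SI \<union> Inr ` SJ"
  have finC: "finite C" using finSI finSJ by (simp add: C_def)
  define M where "M = (\<lambda>v::(nat \<times> 'i + nat \<times> 'j) \<Rightarrow> real. ((\<lambda>i s. v (Inl (s,i))), (\<lambda>j s. v (Inr (s,j)))))"
  define L where "L = (\<lambda>w::('i,'j) point. (\<lambda>c. case c of Inl (s,i) \<Rightarrow> fst w i s | Inr (s,j) \<Rightarrow> snd w j s))"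
  have MLid: "M (L w) = w" for w by (cases w) (simp add: M_def L_def)
  define Kx where "Kx = (\<Inter>c\<in>-C. {v. v c = 0})
    \<inter> (\<Inter>s\<in>{1..n}. {v. (\<Sum>i\<in>I s. v (Inl (s,i))) - (\<Sum>j\<in>J s. v (Inr (s,j))) = b s})
    \<inter> (\<Inter>(s,i)\<in>SI. {v. \<alpha>1 i s \<le> v (Inl (s,i))} \<inter> {v. ereal (v (Inl (s,i))) \<le> \<alpha>2 i s})
    \<inter> (\<Inter>(s,j)\<in>SJ. {v. \<beta>1 j s \<le> v (Inr (s,j))} \<inter> {v. ereal (v (Inr (s,j))) \<le> \<beta>2 j s}
         \<inter> {v. \<beta>2 j s = \<infinity> \<longrightarrow> v (Inr (s,j)) \<le> R})"
  have memK: "v \<in> Kx \<longleftrightarrow> M v \<in> WR" for v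
  proof
    assume v: "v \<in> Kx"
    show "M v \<in> WR"
      using v unfolding Kx_def WR_def W_def feasible_set_def M_def C_def SI_def SJ_def
      by auto
  next
    assume v: "M v \<in> WR"
    show "v \<in> Kx"
      unfolding Kx_def
    proof (intro IntI)
      show "v \<in> (\<Inter>c\<in>-C. {v. v c = 0})"
      proof clarsimp
        fix c assume "c \<notin> C"
        then show "v c = 0" using v
          by (cases c) (force simp: WR_def W_def feasible_set_def M_def C_def SI_def SJ_def image_iff)+
      qed
    qed (use v in \<open>auto simp: WR_def W_def feasible_set_def M_def C_def SI_def SJ_def\<close>)
  qed
  have LK: "L w \<in> Kx" if "w \<in> WR" for w using memK MLid that by simp
  have Kne: "Kx \<noteq> {}" using WR_ne LK by blast
  have MW: "M v \<in> W" if "v \<in> Kx" for v using memK that by (simp add: WR_def)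
  have suppK: "\<forall>v\<in>Kx. \<forall>c. c \<notin> C \<longrightarrow> v c = 0" by (auto simp: Kx_def)
  have cvK: "cvx Kx"
    unfolding cvx_def
  proof (intro ballI)
    fix u v and t :: real assume u: "u \<in> Kx" and v: "v \<in> Kx" and t: "t \<in> {0..1}"
    let ?w = "\<lambda>c. (1-t) * u c + t * v c"
    have t0: "0 \<le> t" "t \<le> 1" using t by auto
    show "?w \<in> Kx"
      unfolding Kx_def
    proof (intro IntI)
      show "?w \<in> (\<Inter>c\<in>-C. {v. v c = 0})" using u v by (auto simp: Kx_def)
      show "?w \<in> (\<Inter>s\<in>{1..n}. {v. (\<Sum>i\<in>I s. v (Inl (s,i))) - (\<Sum>j\<in>J s. v (Inr (s,j))) = b s})"
      proof clarsimp
        fix s assume s: "Suc 0 \<le> s" "s \<le> n"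
        have "(\<Sum>i\<in>I s. u (Inl (s,i))) - (\<Sum>j\<in>J s. u (Inr (s,j))) = b s"
             "(\<Sum>i\<in>I s. v (Inl (s,i))) - (\<Sum>j\<in>J s. v (Inr (s,j))) = b s"
          using u v s by (auto simp: Kx_def)
        then show "(\<Sum>i\<in>I s. (1 - t) * u (Inl (s, i)) + t * v (Inl (s, i))) -
             (\<Sum>j\<in>J s. (1 - t) * u (Inr (s, j)) + t * v (Inr (s, j))) = b s"
          unfolding sum_comb by (simp add: algebra_simps)
      qed
      show "?w \<in> (\<Inter>(s,i)\<in>SI. {v. \<alpha>1 i s \<le> v (Inl (s,i))} \<inter> {v. ereal (v (Inl (s,i))) \<le> \<alpha>2 i s})"
        using u v t0 by (auto simp: Kx_def intro!: cvx_ge ereal_cvx)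
      show "?w \<in> (\<Inter>(s,j)\<in>SJ. {v. \<beta>1 j s \<le> v (Inr (s,j))} \<inter> {v. ereal (v (Inr (s,j))) \<le> \<beta>2 j s}
         \<inter> {v. \<beta>2 j s = \<infinity> \<longrightarrow> v (Inr (s,j)) \<le> R})"
        using u v t0 by (auto simp: Kx_def intro!: cvx_ge cvx_le ereal_cvx)
    qed
  qed
  have clK: "closed Kx"
  proof -
    have cc: "continuous_on UNIV (\<lambda>v::(nat \<times> 'i + nat \<times> 'j) \<Rightarrow> real. v c)" for c
      by (rule cont_coord[OF continuous_on_id])
    have h1: "closed {v::(nat \<times> 'i + nat \<times> 'j) \<Rightarrow> real. v c = a}" for c a
      by (rule closed_Collect_eq[OF cc continuous_on_const])
    have h2: "closed {v::(nat \<times> 'i + nat \<times> 'j) \<Rightarrow> real. a \<le> v c}" for c a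
      by (rule closed_Collect_le[OF continuous_on_const cc])
    have h3: "closed {v::(nat \<times> 'i + nat \<times> 'j) \<Rightarrow> real. ereal (v c) \<le> e}" for c e
      by (rule closed_Collect_le[OF continuous_on_ereal[OF cc] continuous_on_const])
    have h4: "closed {v::(nat \<times> 'i + nat \<times> 'j) \<Rightarrow> real. P \<longrightarrow> v c \<le> a}" for c a P
      by (rule closed_Collect_imp[OF open_Collect_const closed_Collect_le[OF cc continuous_on_const]])
    have h5: "closed {v::(nat \<times> 'i + nat \<times> 'j) \<Rightarrow> real. (\<Sum>i\<in>I s. v (Inl (s,i))) - (\<Sum>j\<in>J s. v (Inr (s,j))) = b s}" for s
      by (rule closed_Collect_eq[OF continuous_on_diff[OF continuous_on_sum continuous_on_sum] continuous_on_const])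
         (rule cc)+
    show ?thesis unfolding Kx_def
      by (intro closed_Int closed_INT ballI) (auto simp: h1 h2 h3 h4 h5 intro!: closed_Int split: prod.splits)
  qed
  define hiJ where "hiJ = (\<lambda>j s. if \<beta>2 j s = \<infinity> then R else real_of_ereal (\<beta>2 j s))"
  define hiI where "hiI = (\<lambda>i s. b s + (\<Sum>j\<in>J s. hiJ j s) - (\<Sum>i'\<in>I s - {i}. \<alpha>1 i' s))"
  define lo where "lo = (\<lambda>c. case c of Inl (s,i) \<Rightarrow> \<alpha>1 i s | Inr (s,j) \<Rightarrow> \<beta>1 j s)"
  define hi where "hi = (\<lambda>c. case c of Inl (s,i) \<Rightarrow> hiI i s | Inr (s,j) \<Rightarrow> hiJ j s)"
  define Box where "Box = PiE UNIV (\<lambda>c. if c \<in> C then {lo c..hi c} else {0})"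
  have cBox: "compact Box"
  proof -
    have "compactin (product_topology (\<lambda>c. euclidean) UNIV) Box"
      unfolding Box_def compactin_PiE by auto
    then show ?thesis by (simp add: euclidean_product_topology)
  qed
  have KBox: "Kx \<subseteq> Box"
  proof
    fix v assume v: "v \<in> Kx"
    have yb: "\<beta>1 j s \<le> v (Inr (s,j)) \<and> v (Inr (s,j)) \<le> hiJ j s" if "s \<in> {1..n}" "j \<in> J s" for s j
      using v that ereal_le_real[of "v (Inr (s,j))" "\<beta>2 j s"]
      by (auto simp: Kx_def SJ_def hiJ_def)
    have xb: "\<alpha>1 i s \<le> v (Inl (s,i)) \<and> v (Inl (s,i)) \<le> hiI i s" if s: "s \<in> {1..n}" and i: "i \<in> I s" for s i
    proof
      show "\<alpha>1 i s \<le> v (Inl (s,i))" using v that by (auto simp: Kx_def SI_def)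
      have bal: "(\<Sum>i\<in>I s. v (Inl (s,i))) - (\<Sum>j\<in>J s. v (Inr (s,j))) = b s"
        using v s by (auto simp: Kx_def)
      have "(\<Sum>i\<in>I s. v (Inl (s,i))) = v (Inl (s,i)) + (\<Sum>i'\<in>I s - {i}. v (Inl (s,i')))"
        using finI[OF s] i by (simp add: sum.remove)
      moreover have "(\<Sum>i'\<in>I s - {i}. \<alpha>1 i' s) \<le> (\<Sum>i'\<in>I s - {i}. v (Inl (s,i')))"
        using v s by (intro sum_mono) (auto simp: Kx_def SI_def)
      moreover have "(\<Sum>j\<in>J s. v (Inr (s,j))) \<le> (\<Sum>j\<in>J s. hiJ j s)"
        using yb s by (intro sum_mono) auto
      ultimately show "v (Inl (s,i)) \<le> hiI i s" using bal by (simp add: hiI_def)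
    qed
    show "v \<in> Box"
      unfolding Box_def
    proof (rule PiE_I)
      fix c
      show "v c \<in> (if c \<in> C then {lo c..hi c} else {0})"
      proof (cases "c \<in> C")
        case True
        then show ?thesis using xb yb by (auto simp: C_def SI_def SJ_def lo_def hi_def)
      next
        case False
        then show ?thesis using suppK v by auto
      qed
    qed auto
  qed
  have cK: "compact Kx"
  proof -
    have "compact (Box \<inter> Kx)" using cBox clK by (rule compact_Int_closed)
    moreover have "Box \<inter> Kx = Kx" using KBox by auto
    ultimately show ?thesis by simp
  qed
  have contM: "continuous_on UNIV M"
    unfolding M_def
    by (intro continuous_on_Pair continuous_on_coordinatewise_then_product cont_coord[OF continuous_on_id])
  define G where "G = (\<lambda>c v. case c of Inl (s,i) \<Rightarrow> g i s (M v) | Inr (s,j) \<Rightarrow> - h j s (M v))"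
  have MKW: "M ` Kx \<subseteq> W" using MW by auto
  have contG: "continuous_on Kx (G c)" if cC: "c \<in> C" for c
  proof -
    consider (l) s i where "c = Inl (s,i)" "s \<in> {1..n}" "i \<in> I s"
      | (r) s j where "c = Inr (s,j)" "s \<in> {1..n}" "j \<in> J s"
      using cC by (auto simp: C_def SI_def SJ_def)
    then show ?thesis
    proof cases
      case l
      have "continuous_on Kx (\<lambda>v. g i s (M v))"
        by (rule continuous_on_compose2[OF g_cont[OF l(2,3)] continuous_on_subset[OF contM] MKW]) auto
      then show ?thesis using l by (simp add: G_def)
    next
      case r
      have "continuous_on Kx (\<lambda>v. h j s (M v))"
        by (rule continuous_on_compose2[OF h_cont[OF r(2,3)] continuous_on_subset[OF contM] MKW]) auto
      then show ?thesis using r by (simp add: G_def continuous_on_minus)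
    qed
  qed
  obtain vb where vbK: "vb \<in> Kx" and vbvi: "\<forall>v\<in>Kx. (\<Sum>c\<in>C. G c vb * (v c - vb c)) \<ge> 0"
    using vi_fun[OF finC cK Kne cvK suppK, of G] contG by blast
  have ident: "(\<Sum>c\<in>C. G c vb * (v c - vb c)) =
      (\<Sum>s\<in>{1..n}. (\<Sum>i\<in>I s. g i s (M vb) * (fst (M v) i s - fst (M vb) i s))
                 - (\<Sum>j\<in>J s. h j s (M vb) * (snd (M v) j s - snd (M vb) j s)))" for v
  proof -
    let ?F = "\<lambda>c. G c vb * (v c - vb c)"
    have "(\<Sum>c\<in>C. ?F c) = (\<Sum>c\<in>Inl ` SI. ?F c) + (\<Sum>c\<in>Inr ` SJ. ?F c)"
      unfolding C_def using finSI finSJ by (intro sum.union_disjoint) auto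
    also have "(\<Sum>c\<in>Inl ` SI. ?F c) = (\<Sum>p\<in>SI. ?F (Inl p))"
      by (subst sum.reindex) (auto simp: inj_on_def)
    also have "\<dots> = (\<Sum>s\<in>{1..n}. \<Sum>i\<in>I s. ?F (Inl (s,i)))"
      unfolding SI_def using finI by (subst sum.Sigma) auto
    also have "(\<Sum>c\<in>Inr ` SJ. ?F c) = (\<Sum>p\<in>SJ. ?F (Inr p))"
      by (subst sum.reindex) (auto simp: inj_on_def)
    also have "\<dots> = (\<Sum>s\<in>{1..n}. \<Sum>j\<in>J s. ?F (Inr (s,j)))"
      unfolding SJ_def using finJ by (subst sum.Sigma) auto
    finally show ?thesis
      by (simp add: G_def M_def sum_subtractf sum_negf)
  qed
  show ?thesis
  proof (intro bexI[of _ "M vb"] ballI)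
    show "M vb \<in> WR" using memK vbK by simp
    fix w assume w: "w \<in> WR"
    have "(\<Sum>c\<in>C. G c vb * (L w c - vb c)) \<ge> 0" using vbvi LK[OF w] by blast
    then show "(\<Sum>s\<in>{1..n}. (\<Sum>i\<in>I s. g i s (M vb) * (fst w i s - fst (M vb) i s))
                 - (\<Sum>j\<in>J s. h j s (M vb) * (snd w j s - snd (M vb) j s))) \<ge> 0"
      unfolding ident MLid .
  qed
qed




lemma lin_tendsto: "((\<lambda>t. c + t * d - t * e) \<longlongrightarrow> (c::real)) (at_right 0)"
proof -
  have "((\<lambda>t. c + t * d - t * e) \<longlongrightarrow> c + 0 * d - 0 * e) (at_right (0::real))"
    by (intro tendsto_intros)
  then show ?thesis by simp
qed

lemma ev_gt: "a < c \<Longrightarrow> eventually (\<lambda>t. a < c + t * d - t * e) (at_right (0::real))"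
  by (rule order_tendstoD(1)[OF lin_tendsto])

lemma ev_lt: "c < a \<Longrightarrow> eventually (\<lambda>t. c + t * d - t * e < a) (at_right (0::real))"
  by (rule order_tendstoD(2)[OF lin_tendsto])

lemma extend:
  fixes n :: nat and I :: "nat \<Rightarrow> 'i set" and J :: "nat \<Rightarrow> 'j set"
    and b :: "nat \<Rightarrow> real"
    and \<alpha>1 :: "'i \<Rightarrow> nat \<Rightarrow> real" and \<alpha>2 :: "'i \<Rightarrow> nat \<Rightarrow> ereal"
    and \<beta>1 :: "'j \<Rightarrow> nat \<Rightarrow> real" and \<beta>2 :: "'j \<Rightarrow> nat \<Rightarrow> ereal"
    and g :: "'i \<Rightarrow> nat \<Rightarrow> ('i,'j) point \<Rightarrow> real"
    and h :: "'j \<Rightarrow> nat \<Rightarrow> ('i,'j) point \<Rightarrow> real"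
    and R r :: real and xb :: "'i \<Rightarrow> nat \<Rightarrow> real" and yb :: "'j \<Rightarrow> nat \<Rightarrow> real"
  defines "W \<equiv> feasible_set n I J b \<alpha>1 \<alpha>2 \<beta>1 \<beta>2"
  defines "WR \<equiv> {w\<in>W. \<forall>s\<in>{1..n}. \<forall>l\<in>J s. \<beta>2 l s = \<infinity> \<longrightarrow> snd w l s \<le> R}"
  assumes finI: "\<And>s. s \<in> {1..n} \<Longrightarrow> finite (I s)"
    and finJ: "\<And>s. s \<in> {1..n} \<Longrightarrow> finite (J s)"
    and wbR: "(xb, yb) \<in> WR"
    and vir: "\<forall>w\<in>WR. (\<Sum>s\<in>{1..n}. (\<Sum>i\<in>I s. g i s (xb,yb) * (fst w i s - xb i s))
                 - (\<Sum>j\<in>J s. h j s (xb,yb) * (snd w j s - yb j s))) \<ge> 0"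
    and Rr: "R > r" and Rb: "\<And>s l. s \<in> {1..n} \<Longrightarrow> l \<in> J s \<Longrightarrow> R > \<beta>1 l s"
    and coer: "\<forall>x y. (x, y) \<in> W \<longrightarrow> (\<forall>s\<in>{1..n}. \<forall>l\<in>J s.
        \<beta>2 l s = \<infinity> \<longrightarrow> y l s > max r (\<beta>1 l s) \<longrightarrow>
        (\<exists>k\<in>I s. \<alpha>2 k s = \<infinity> \<and> x k s > \<alpha>1 k s \<and> g k s (x, y) \<ge> h l s (x, y)))"
  shows "\<forall>x y. (x, y) \<in> W \<longrightarrow> (\<Sum>s\<in>{1..n}. (\<Sum>i\<in>I s. g i s (xb,yb) * (x i s - xb i s))
                 - (\<Sum>j\<in>J s. h j s (xb,yb) * (y j s - yb j s))) \<ge> 0"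
proof (intro allI impI)
  fix x y assume xyW: "(x, y) \<in> W"
  define Phi where "Phi = (\<lambda>(x::'i \<Rightarrow> nat \<Rightarrow> real) (y::'j \<Rightarrow> nat \<Rightarrow> real). (\<Sum>s\<in>{1..n}. (\<Sum>i\<in>I s. g i s (xb,yb) * (x i s - xb i s))
                 - (\<Sum>j\<in>J s. h j s (xb,yb) * (y j s - yb j s))))"
  show "Phi x y \<ge> 0"
  proof (rule ccontr)
    assume "\<not> Phi x y \<ge> 0"
    then have neg: "Phi x y < 0" by simp
    have wbW: "(xb, yb) \<in> W" using wbR by (simp add: WR_def)
    have ybR: "\<And>s l. s \<in> {1..n} \<Longrightarrow> l \<in> J s \<Longrightarrow> \<beta>2 l s = \<infinity> \<Longrightarrow> yb l s \<le> R"
      using wbR by (auto simp: WR_def)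
    have fW: "\<And>s i. (s \<notin> {1..n} \<or> i \<notin> I s) \<Longrightarrow> x i s = 0"
             "\<And>s j. (s \<notin> {1..n} \<or> j \<notin> J s) \<Longrightarrow> y j s = 0"
             "\<And>s. s \<in> {1..n} \<Longrightarrow> (\<Sum>i\<in>I s. x i s) - (\<Sum>j\<in>J s. y j s) = b s"
             "\<And>s i. s \<in> {1..n} \<Longrightarrow> i \<in> I s \<Longrightarrow> \<alpha>1 i s \<le> x i s \<and> ereal (x i s) \<le> \<alpha>2 i s"
             "\<And>s j. s \<in> {1..n} \<Longrightarrow> j \<in> J s \<Longrightarrow> \<beta>1 j s \<le> y j s \<and> ereal (y j s) \<le> \<beta>2 j s"
      using xyW by (auto simp: W_def feasible_set_def)
    have fWb: "\<And>s i. (s \<notin> {1..n} \<or> i \<notin> I s) \<Longrightarrow> xb i s = 0"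
             "\<And>s j. (s \<notin> {1..n} \<or> j \<notin> J s) \<Longrightarrow> yb j s = 0"
             "\<And>s. s \<in> {1..n} \<Longrightarrow> (\<Sum>i\<in>I s. xb i s) - (\<Sum>j\<in>J s. yb j s) = b s"
             "\<And>s i. s \<in> {1..n} \<Longrightarrow> i \<in> I s \<Longrightarrow> \<alpha>1 i s \<le> xb i s \<and> ereal (xb i s) \<le> \<alpha>2 i s"
             "\<And>s j. s \<in> {1..n} \<Longrightarrow> j \<in> J s \<Longrightarrow> \<beta>1 j s \<le> yb j s \<and> ereal (yb j s) \<le> \<beta>2 j s"
      using wbW by (auto simp: W_def feasible_set_def)
    define T where "T = (\<lambda>s l. s \<in> {1..n} \<and> l \<in> J s \<and> \<beta>2 l s = \<infinity> \<and> yb l s = R)"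
    define P where "P = (\<lambda>s l k. k \<in> I s \<and> \<alpha>2 k s = \<infinity> \<and> xb k s > \<alpha>1 k s \<and> g k s (xb,yb) \<ge> h l s (xb,yb))"
    have kex: "\<exists>k. P s l k" if "T s l" for s l
    proof -
      have "yb l s > max r (\<beta>1 l s)" using that Rr Rb[of s l] by (auto simp: T_def)
      then show ?thesis using coer wbW that unfolding T_def P_def by blast
    qed
    define kf where "kf = (\<lambda>s l. SOME k. P s l k)"
    have kf: "P s l (kf s l)" if "T s l" for s l
      unfolding kf_def using kex[OF that] by (rule someI_ex)
    define \<delta> where "\<delta> = (\<lambda>j s. if T s j then max 0 (y j s - yb j s) else 0)"
    define Ls where "Ls = (\<lambda>s. {l \<in> J s. T s l})"
    define \<Delta> where "\<Delta> = (\<lambda>i s. \<Sum>l\<in>{l \<in> Ls s. kf s l = i}. \<delta> l s)"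
    have \<delta>nn: "\<delta> j s \<ge> 0" for j s by (simp add: \<delta>_def)
    have \<Delta>nn: "\<Delta> i s \<ge> 0" for i s unfolding \<Delta>_def by (intro sum_nonneg) (simp add: \<delta>nn)
    have \<Delta>pos: "\<exists>l. T s l \<and> kf s l = i" if "\<Delta> i s \<noteq> 0" for i s
    proof (rule ccontr)
      assume "\<not> ?thesis"
      then have "{l \<in> Ls s. kf s l = i} = {}" by (auto simp: Ls_def)
      then have "\<Delta> i s = 0" unfolding \<Delta>_def by (metis sum.empty)
      then show False using that by simp
    qed
    have finLs: "finite (Ls s)" if "s \<in> {1..n}" for s
      using finJ[OF that] by (simp add: Ls_def)
    have kfI: "kf s ` Ls s \<subseteq> I s" for s using kf by (auto simp: Ls_def P_def)
    have sum\<Delta>: "(\<Sum>i\<in>I s. \<Delta> i s) = (\<Sum>j\<in>J s. \<delta> j s)" if s: "s \<in> {1..n}" for s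
    proof -
      have "(\<Sum>i\<in>I s. \<Delta> i s) = (\<Sum>l\<in>Ls s. \<delta> l s)"
        unfolding \<Delta>_def using sum.group[OF finLs[OF s] finI[OF s] kfI, of "\<lambda>l. \<delta> l s"] by simp
      also have "\<dots> = (\<Sum>j\<in>J s. \<delta> j s)"
        by (rule sum.mono_neutral_left[OF finJ[OF s]]) (auto simp: Ls_def \<delta>_def)
      finally show ?thesis .
    qed
    have sumg\<Delta>: "(\<Sum>i\<in>I s. g i s (xb,yb) * \<Delta> i s) \<ge> (\<Sum>j\<in>J s. h j s (xb,yb) * \<delta> j s)" if s: "s \<in> {1..n}" for s
    proof -
      have "(\<Sum>i\<in>I s. g i s (xb,yb) * \<Delta> i s) = (\<Sum>i\<in>I s. \<Sum>l\<in>{l \<in> Ls s. kf s l = i}. g (kf s l) s (xb,yb) * \<delta> l s)"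
        unfolding \<Delta>_def sum_distrib_left by (intro sum.cong refl) auto
      also have "\<dots> = (\<Sum>l\<in>Ls s. g (kf s l) s (xb,yb) * \<delta> l s)"
        using sum.group[OF finLs[OF s] finI[OF s] kfI, of "\<lambda>l. g (kf s l) s (xb,yb) * \<delta> l s"] by simp
      also have "\<dots> \<ge> (\<Sum>l\<in>Ls s. h l s (xb,yb) * \<delta> l s)"
        using kf \<delta>nn by (intro sum_mono mult_right_mono) (auto simp: Ls_def P_def)
      also have "(\<Sum>l\<in>Ls s. h l s (xb,yb) * \<delta> l s) = (\<Sum>j\<in>J s. h j s (xb,yb) * \<delta> j s)"
        by (rule sum.mono_neutral_left[OF finJ[OF s]]) (auto simp: Ls_def \<delta>_def)
      finally show ?thesis .
    qed
    define E where "E = (\<Sum>s\<in>{1..n}. (\<Sum>i\<in>I s. g i s (xb,yb) * \<Delta> i s) - (\<Sum>j\<in>J s. h j s (xb,yb) * \<delta> j s))"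
    have E: "E \<ge> 0" unfolding E_def using sumg\<Delta> by (intro sum_nonneg) auto
    define xt where "xt = (\<lambda>t i s. xb i s + t * (x i s - xb i s) - t * \<Delta> i s)"
    define yt where "yt = (\<lambda>t j s. yb j s + t * (y j s - yb j s) - t * \<delta> j s)"
    have PhiT: "Phi (xt t) (yt t) = t * Phi x y - t * E" for t
    proof -
      have "Phi (xt t) (yt t) = (\<Sum>s\<in>{1..n}. t * ((\<Sum>i\<in>I s. g i s (xb,yb) * (x i s - xb i s))
                 - (\<Sum>j\<in>J s. h j s (xb,yb) * (y j s - yb j s))) - t * ((\<Sum>i\<in>I s. g i s (xb,yb) * \<Delta> i s) - (\<Sum>j\<in>J s. h j s (xb,yb) * \<delta> j s)))"
        unfolding Phi_def
        by (intro sum.cong refl) (simp add: xt_def yt_def algebra_simps sum.distrib sum_subtractf sum_distrib_left)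
      also have "\<dots> = t * Phi x y - t * E"
        by (simp add: Phi_def E_def sum_subtractf right_diff_distrib flip: sum_distrib_left)
      finally show ?thesis .
    qed
    have memWR: "(xt t, yt t) \<in> WR" if t: "0 < t" "t \<le> 1"
      and c1: "\<forall>s\<in>{1..n}. \<forall>i\<in>I s. \<Delta> i s \<noteq> 0 \<longrightarrow> \<alpha>1 i s \<le> xt t i s"
      and c2: "\<forall>s\<in>{1..n}. \<forall>j\<in>J s. \<beta>2 j s = \<infinity> \<and> yb j s < R \<longrightarrow> yt t j s \<le> R" for t
    proof -
      have z1: "xt t i s = 0" if "s \<notin> {1..n} \<or> i \<notin> I s" for i s
      proof -
        have "\<Delta> i s = 0"
        proof (rule ccontr)
          assume "\<Delta> i s \<noteq> 0"
          then obtain l where "T s l" "kf s l = i" using \<Delta>pos by blast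
          then show False using kf[of s l] that by (auto simp: T_def P_def)
        qed
        then show ?thesis using that fW(1) fWb(1) by (simp add: xt_def)
      qed
      have z2: "yt t j s = 0" if "s \<notin> {1..n} \<or> j \<notin> J s" for j s
        using that fW(2) fWb(2) by (auto simp: yt_def \<delta>_def T_def)
      have bal: "(\<Sum>i\<in>I s. xt t i s) - (\<Sum>j\<in>J s. yt t j s) = b s" if s: "s \<in> {1..n}" for s
      proof -
        have "(\<Sum>i\<in>I s. xt t i s) = (\<Sum>i\<in>I s. xb i s) + t * ((\<Sum>i\<in>I s. x i s) - (\<Sum>i\<in>I s. xb i s)) - t * (\<Sum>i\<in>I s. \<Delta> i s)"
          by (simp add: xt_def sum.distrib sum_subtractf sum_distrib_left right_diff_distrib)
        moreover have "(\<Sum>j\<in>J s. yt t j s) = (\<Sum>j\<in>J s. yb j s) + t * ((\<Sum>j\<in>J s. y j s) - (\<Sum>j\<in>J s. yb j s)) - t * (\<Sum>j\<in>J s. \<delta> j s)"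
          by (simp add: yt_def sum.distrib sum_subtractf sum_distrib_left right_diff_distrib)
        ultimately show ?thesis using sum\<Delta>[OF s] fW(3)[OF s] fWb(3)[OF s] by (simp add: algebra_simps)
      qed
      have xcv: "xt t i s \<le> (1-t) * xb i s + t * x i s" for i s
        using \<Delta>nn[of i s] t by (simp add: xt_def algebra_simps)
      have xlo: "\<alpha>1 i s \<le> xt t i s" if s: "s \<in> {1..n}" and i: "i \<in> I s" for s i
      proof (cases "\<Delta> i s = 0")
        case True
        then have "xt t i s = (1-t) * xb i s + t * x i s" by (simp add: xt_def algebra_simps)
        then show ?thesis using fW(4)[OF s i] fWb(4)[OF s i] t by (simp add: cvx_ge)
      next
        case False then show ?thesis using c1 s i by auto
      qed
      have xhi: "ereal (xt t i s) \<le> \<alpha>2 i s" if s: "s \<in> {1..n}" and i: "i \<in> I s" for s i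
      proof -
        have "ereal ((1-t) * xb i s + t * x i s) \<le> \<alpha>2 i s"
          using fW(4)[OF s i] fWb(4)[OF s i] t by (intro ereal_cvx) auto
        then show ?thesis using xcv[of i s] by (meson ereal_less_eq(3) order_trans)
      qed
      have ycases: "yt t j s = yb j s \<or> yt t j s = (1-t) * yb j s + t * y j s" for j s
        using t by (auto simp: yt_def \<delta>_def max_def algebra_simps)
      have ylo: "\<beta>1 j s \<le> yt t j s" if s: "s \<in> {1..n}" and j: "j \<in> J s" for s j
      proof -
        have "\<beta>1 j s \<le> (1-t) * yb j s + t * y j s"
          by (rule cvx_ge) (use fW(5)[OF s j] fWb(5)[OF s j] t in auto)
        then show ?thesis using ycases[of j s] fWb(5)[OF s j] by auto
      qed
      have yhi: "ereal (yt t j s) \<le> \<beta>2 j s" if s: "s \<in> {1..n}" and j: "j \<in> J s" for s j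
      proof -
        have "ereal ((1-t) * yb j s + t * y j s) \<le> \<beta>2 j s"
          by (rule ereal_cvx) (use fW(5)[OF s j] fWb(5)[OF s j] t in auto)
        then show ?thesis using ycases[of j s] fWb(5)[OF s j] by auto
      qed
      have ytr: "yt t j s \<le> R" if s: "s \<in> {1..n}" and j: "j \<in> J s" and inf: "\<beta>2 j s = \<infinity>" for s j
      proof (cases "yb j s = R")
        case True
        then have "T s j" using s j inf by (simp add: T_def)
        then have "yt t j s \<le> yb j s" using t by (auto simp: yt_def \<delta>_def max_def algebra_simps mult_left_mono)
        then show ?thesis using True by simp
      next
        case False
        then have "yb j s < R" using ybR[OF s j inf] by simp
        then show ?thesis using c2 s j inf by auto
      qed
      show ?thesis
        unfolding WR_def W_def feasible_set_def
        using z1 z2 bal xlo xhi ylo yhi ytr by auto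
    qed
    have ev1: "eventually (\<lambda>t. \<forall>s\<in>{1..n}. \<forall>i\<in>I s. \<Delta> i s \<noteq> 0 \<longrightarrow> \<alpha>1 i s \<le> xt t i s) (at_right 0)"
    proof (intro eventually_ball_finite ballI finite_atLeastAtMost finI, assumption)
      fix s i assume s: "s \<in> {1..n}" and i: "i \<in> I s"
      show "eventually (\<lambda>t. \<Delta> i s \<noteq> 0 \<longrightarrow> \<alpha>1 i s \<le> xt t i s) (at_right 0)"
      proof (cases "\<Delta> i s = 0")
        case True then show ?thesis by simp
      next
        case False
        then obtain l where "T s l" "kf s l = i" using \<Delta>pos by blast
        then have "\<alpha>1 i s < xb i s" using kf[of s l] by (auto simp: P_def)
        then show ?thesis unfolding xt_def
          by (rule eventually_mono[OF ev_gt[where d="x i s - xb i s" and e="\<Delta> i s"]]) simp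
      qed
    qed
    have ev2: "eventually (\<lambda>t. \<forall>s\<in>{1..n}. \<forall>j\<in>J s. \<beta>2 j s = \<infinity> \<and> yb j s < R \<longrightarrow> yt t j s \<le> R) (at_right 0)"
    proof (intro eventually_ball_finite ballI finite_atLeastAtMost finJ, assumption)
      fix s j assume s: "s \<in> {1..n}" and j: "j \<in> J s"
      show "eventually (\<lambda>t. \<beta>2 j s = \<infinity> \<and> yb j s < R \<longrightarrow> yt t j s \<le> R) (at_right 0)"
      proof (cases "yb j s < R")
        case False then show ?thesis by simp
      next
        case True
        then show ?thesis unfolding yt_def
          by (rule eventually_mono[OF ev_lt[where d="y j s - yb j s" and e="\<delta> j s"]]) simp
      qed
    qed
    have ev0: "eventually (\<lambda>t::real. 0 < t \<and> t \<le> 1) (at_right 0)"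
    proof -
      have "eventually (\<lambda>t::real. 0 + t * 1 - t * 0 < 2) (at_right 0)" by (rule ev_lt) simp
      then have "eventually (\<lambda>t::real. t < 2) (at_right 0)" by simp
      moreover have "eventually (\<lambda>t::real. t \<le> 1) (at_right 0)"
        by (rule eventually_mono[OF ev_lt[of 0 1 1 0]]) auto
      ultimately show ?thesis using eventually_at_right_less[of "0::real"]
        by eventually_elim auto
    qed
    have "eventually (\<lambda>t. (0 < t \<and> t \<le> 1) \<and> (\<forall>s\<in>{1..n}. \<forall>i\<in>I s. \<Delta> i s \<noteq> 0 \<longrightarrow> \<alpha>1 i s \<le> xt t i s)
        \<and> (\<forall>s\<in>{1..n}. \<forall>j\<in>J s. \<beta>2 j s = \<infinity> \<and> yb j s < R \<longrightarrow> yt t j s \<le> R)) (at_right 0)"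
      using ev0 ev1 ev2 by eventually_elim blast
    then obtain t :: real where tt: "0 < t" "t \<le> 1"
      and c1: "\<forall>s\<in>{1..n}. \<forall>i\<in>I s. \<Delta> i s \<noteq> 0 \<longrightarrow> \<alpha>1 i s \<le> xt t i s"
      and c2: "\<forall>s\<in>{1..n}. \<forall>j\<in>J s. \<beta>2 j s = \<infinity> \<and> yb j s < R \<longrightarrow> yt t j s \<le> R"
      using eventually_happens'[OF trivial_limit_at_right_real] by blast
    have "(xt t, yt t) \<in> WR" by (rule memWR[OF tt c1 c2])
    then have "Phi (xt t) (yt t) \<ge> 0" using bspec[OF vir, of "(xt t, yt t)"] by (simp add: Phi_def)
    moreover have "Phi (xt t) (yt t) < 0"
    proof -
      have "t * Phi x y < 0" using tt neg by (simp add: mult_pos_neg)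
      moreover have "t * E \<ge> 0" using tt E by simp
      ultimately show ?thesis unfolding PhiT by linarith
    qed
    ultimately show False by simp
  qed
qed


theorem proposition2p2:
  fixes n :: nat and I :: "nat \<Rightarrow> 'i set" and J :: "nat \<Rightarrow> 'j set"
    and b :: "nat \<Rightarrow> real"
    and \<alpha>1 :: "'i \<Rightarrow> nat \<Rightarrow> real" and \<alpha>2 :: "'i \<Rightarrow> nat \<Rightarrow> ereal"
    and \<beta>1 :: "'j \<Rightarrow> nat \<Rightarrow> real" and \<beta>2 :: "'j \<Rightarrow> nat \<Rightarrow> ereal"
    and g :: "'i \<Rightarrow> nat \<Rightarrow> ('i,'j) point \<Rightarrow> real"
    and h :: "'j \<Rightarrow> nat \<Rightarrow> ('i,'j) point \<Rightarrow> real"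
  defines "W \<equiv> feasible_set n I J b \<alpha>1 \<alpha>2 \<beta>1 \<beta>2"
  assumes finI: "\<And>s. s \<in> {1..n} \<Longrightarrow> finite (I s)"
    and finJ: "\<And>s. s \<in> {1..n} \<Longrightarrow> finite (J s)"
    and \<alpha>_lt: "\<And>s i. s \<in> {1..n} \<Longrightarrow> i \<in> I s \<Longrightarrow> ereal (\<alpha>1 i s) < \<alpha>2 i s"
    and \<beta>_lt: "\<And>s j. s \<in> {1..n} \<Longrightarrow> j \<in> J s \<Longrightarrow> ereal (\<beta>1 j s) < \<beta>2 j s"
    and W_ne: "W \<noteq> {}"
    and g_cont: "\<And>s i. s \<in> {1..n} \<Longrightarrow> i \<in> I s \<Longrightarrow> continuous_on W (g i s)"
    and h_cont: "\<And>s j. s \<in> {1..n} \<Longrightarrow> j \<in> J s \<Longrightarrow> continuous_on W (h j s)"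
    and coercive: "\<exists>r>0. \<forall>x y. (x, y) \<in> W \<longrightarrow> (\<forall>s\<in>{1..n}. \<forall>l\<in>J s.
        \<beta>2 l s = \<infinity> \<longrightarrow> y l s > max r (\<beta>1 l s) \<longrightarrow>
        (\<exists>k\<in>I s. \<alpha>2 k s = \<infinity> \<and> x k s > \<alpha>1 k s \<and> g k s (x, y) \<ge> h l s (x, y)))"
  shows "\<exists>wb\<in>W. \<forall>x y. (x, y) \<in> W \<longrightarrow>
     (\<Sum>s\<in>{1..n}. (\<Sum>i\<in>I s. g i s wb * (x i s - fst wb i s))
                 - (\<Sum>j\<in>J s. h j s wb * (y j s - snd wb j s))) \<ge> 0"
proof -
  obtain r where r: "r > 0" and coer: "\<forall>x y. (x, y) \<in> W \<longrightarrow> (\<forall>s\<in>{1..n}. \<forall>l\<in>J s.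
        \<beta>2 l s = \<infinity> \<longrightarrow> y l s > max r (\<beta>1 l s) \<longrightarrow>
        (\<exists>k\<in>I s. \<alpha>2 k s = \<infinity> \<and> x k s > \<alpha>1 k s \<and> g k s (x, y) \<ge> h l s (x, y)))"
    using coercive by blast
  obtain x0 y0 where w0: "(x0, y0) \<in> W" using W_ne by auto
  define S where "S = (\<Sum>s\<in>{1..n}. \<Sum>l\<in>J s. \<bar>\<beta>1 l s\<bar> + \<bar>y0 l s\<bar>)"
  define R where "R = 1 + r + S"
  have S0: "S \<ge> 0" unfolding S_def by (intro sum_nonneg) auto
  have bnd: "\<bar>\<beta>1 l s\<bar> + \<bar>y0 l s\<bar> \<le> S" if s: "s \<in> {1..n}" and l: "l \<in> J s" for s l
  proof -
    have "\<bar>\<beta>1 l s\<bar> + \<bar>y0 l s\<bar> \<le> (\<Sum>l\<in>J s. \<bar>\<beta>1 l s\<bar> + \<bar>y0 l s\<bar>)"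
      using finJ[OF s] l by (intro member_le_sum) auto
    also have "\<dots> \<le> S" unfolding S_def
      using s by (intro member_le_sum) (auto intro: sum_nonneg)
    finally show ?thesis .
  qed
  have Rr: "R > r" using S0 by (simp add: R_def)
  have Rb: "R > \<beta>1 l s" "R > y0 l s" if "s \<in> {1..n}" "l \<in> J s" for s l
    using bnd[OF that] r by (auto simp: R_def)
  define WR where "WR = {w\<in>W. \<forall>s\<in>{1..n}. \<forall>l\<in>J s. \<beta>2 l s = \<infinity> \<longrightarrow> snd w l s \<le> R}"
  have "(x0, y0) \<in> WR" using w0 Rb by (auto simp: WR_def less_imp_le)
  then have WR_ne: "WR \<noteq> {}" by auto
  obtain wb where wbR: "wb \<in> WR" and vir: "\<forall>w\<in>WR. (\<Sum>s\<in>{1..n}. (\<Sum>i\<in>I s. g i s wb * (fst w i s - fst wb i s))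
                 - (\<Sum>j\<in>J s. h j s wb * (snd w j s - snd wb j s))) \<ge> 0"
    using VIR[where n=n and I=I and J=J and b=b and ?\<alpha>1.0=\<alpha>1 and ?\<alpha>2.0=\<alpha>2 and ?\<beta>1.0=\<beta>1 and ?\<beta>2.0=\<beta>2 and g=g and h=h and R=R] finI finJ g_cont h_cont WR_ne
    unfolding WR_def W_def by blast
  obtain xb yb where wb: "wb = (xb, yb)" by (cases wb)
  have "\<forall>x y. (x, y) \<in> W \<longrightarrow> (\<Sum>s\<in>{1..n}. (\<Sum>i\<in>I s. g i s (xb,yb) * (x i s - xb i s))
                 - (\<Sum>j\<in>J s. h j s (xb,yb) * (y j s - yb j s))) \<ge> 0"
    using extend[where n=n and I=I and J=J and b=b and ?\<alpha>1.0=\<alpha>1 and ?\<alpha>2.0=\<alpha>2 and ?\<beta>1.0=\<beta>1 and ?\<beta>2.0=\<beta>2 and g=g and h=h and R=R and r=r and xb=xb and yb=yb] finI finJ wbR vir Rr Rb coer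
    unfolding WR_def W_def wb by auto
  moreover have "wb \<in> W" using wbR by (simp add: WR_def)
  ultimately show ?thesis unfolding wb by (intro bexI[of _ "(xb, yb)"]) simp_all
qed


end
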